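(* Let $x=(x_1,\ldots,x_n)$ and $y=(y_1,\ldots,y_m)$ be observed samples, let $\mathbb{P}^{x,y}$ be the posterior distribution of $(P_1,P_2)$ given $\mathcal{D}_{n,m}=\{x,y\}$, with expectation $\mathbb{E}^{x,y}$. Let $d$ be a distance between probability measures, $M=\sup_{P_1,P_2}d(P_1,P_2)\in(0,\infty]$, $w:[0,M)\to(0,\infty]$ a probability density on $[0,M)$ with cumulative distribution function $W$, and $\mathrm{WIKS}(\mathcal{D}_{n,m})=\int_0^M w(\varepsilon)\,\mathbb{P}^{x,y}(d(P_1,P_2)>\varepsilon)\,d\varepsilon$. Consider testing $H_0:P_1=P_2$ with decision space $\{0,1\}$ ($0$ = accept $H_0$, $1$ = reject $H_0$) and loss function $$L((P_1,P_2),a)=\begin{cases} c_0\,W(d(P_1,P_2)), & a=0,\\ c_1\,[1-W(d(P_1,P_2))], & a=1,\end{cases}$$ where $c_0,c_1>0$. Then the Bayes rule (the decision minimizing the posterior expected loss $\mathbb{E}^{x,y}[L((P_1,P_2),a)]$) is to reject $H_0$ if and only if $$\mathrm{WIKS}(\mathcal{D}_{n,m})>c,\qquad c=\frac{c_1}{c_1+c_0}.$$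
   Context: Bayesian two-sample setting: $(P_1,P_2)$ is a random pair of probability distributions with some prior; conditionally on $(P_1,P_2)$, $x$ is an i.i.d. sample from $P_1$ and $y$ an i.i.d. sample from $P_2$, independently. *)

theory Defs
  imports "HOL-Probability.Probability"
begin

text \<open>Parameter space: pairs (P1,P2) of elements of a type 'm (e.g. probability measures).
  The posterior is a probability measure Q on 'm \<times> 'm; d is the distance.\<close>

definition sup_dist :: "('m \<Rightarrow> 'm \<Rightarrow> real) \<Rightarrow> ereal" where
  "sup_dist d = (SUP p. ereal (d (fst p) (snd p)))"

definition zero_to :: "ereal \<Rightarrow> real set" where
  "zero_to M = {e. 0 \<le> e \<and> ereal e < M}"

definition cdf_w :: "(real \<Rightarrow> ennreal) \<Rightarrow> ereal \<Rightarrow> real \<Rightarrow> real" where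
  "cdf_w w M t = enn2real (\<integral>\<^sup>+ e. w e * indicator (zero_to M \<inter> {..t}) e \<partial>lborel)"

definition WIKS :: "('m \<times> 'm) measure \<Rightarrow> ('m \<Rightarrow> 'm \<Rightarrow> real) \<Rightarrow> (real \<Rightarrow> ennreal) \<Rightarrow> real" where
  "WIKS Q d w = enn2real (\<integral>\<^sup>+ e. w e * indicator (zero_to (sup_dist d)) e
       * emeasure Q {p \<in> space Q. d (fst p) (snd p) > e} \<partial>lborel)"

definition loss :: "real \<Rightarrow> real \<Rightarrow> ('m \<Rightarrow> 'm \<Rightarrow> real) \<Rightarrow> (real \<Rightarrow> ennreal) \<Rightarrow> 'm \<times> 'm \<Rightarrow> nat \<Rightarrow> real" where
  "loss c0 c1 d w p a =
     (if a = 0 then c0 * cdf_w w (sup_dist d) (d (fst p) (snd p))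
      else c1 * (1 - cdf_w w (sup_dist d) (d (fst p) (snd p))))"

definition post_risk :: "('m \<times> 'm) measure \<Rightarrow> real \<Rightarrow> real \<Rightarrow> ('m \<Rightarrow> 'm \<Rightarrow> real) \<Rightarrow> (real \<Rightarrow> ennreal) \<Rightarrow> nat \<Rightarrow> real" where
  "post_risk Q c0 c1 d w a = (\<integral>p. loss c0 c1 d w p a \<partial>Q)"

text \<open>The Bayes rule rejects H0 iff rejecting has strictly smaller posterior expected loss
  (on ties it accepts).\<close>
definition bayes_rejects :: "('m \<times> 'm) measure \<Rightarrow> real \<Rightarrow> real \<Rightarrow> ('m \<Rightarrow> 'm \<Rightarrow> real) \<Rightarrow> (real \<Rightarrow> ennreal) \<Rightarrow> bool" where
  "bayes_rejects Q c0 c1 d w \<longleftrightarrow> post_risk Q c0 c1 d w 1 < post_risk Q c0 c1 d w 0"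

end

theory Submission
  imports Defs
begin

theorem theorem3:
  fixes Q :: "('m \<times> 'm) measure" and d :: "'m \<Rightarrow> 'm \<Rightarrow> real"
    and w :: "real \<Rightarrow> ennreal" and c0 c1 :: real
  assumes "prob_space Q"
    and "(\<lambda>p. d (fst p) (snd p)) \<in> borel_measurable Q"
    and "\<And>p1 p2. d p1 p2 \<ge> 0"
    and "sup_dist d > 0"
    and "w \<in> borel_measurable lborel"
    and "\<And>e. e \<in> zero_to (sup_dist d) \<Longrightarrow> w e > 0"
    and "(\<integral>\<^sup>+ e. w e * indicator (zero_to (sup_dist d)) e \<partial>lborel) = 1"
    and "c0 > 0" and "c1 > 0"
  shows "bayes_rejects Q c0 c1 d w \<longleftrightarrow> WIKS Q d w > c1 / (c1 + c0)"
proof -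
  interpret P: prob_space Q by fact
  define M where "M = sup_dist d"
  define Z where "Z = zero_to M"
  define D where "D = (\<lambda>p. d (fst p) (snd p))"
  define G where "G = (\<lambda>t. \<integral>\<^sup>+ e. w e * indicator (Z \<inter> {..t}) e \<partial>lborel)"
  define W where "W = (\<lambda>t. enn2real (G t))"
  have Dm[measurable]: "D \<in> borel_measurable Q" using assms(2) by (simp add: D_def)
  have wm[measurable]: "w \<in> borel_measurable borel" using assms(5) by simp
  have Zm[measurable]: "Z \<in> sets borel"
  proof -
    have "Z = {e. 0 \<le> e} \<inter> {e. ereal e < M}" by (auto simp: Z_def zero_to_def)
    moreover have "{e::real. ereal e < M} \<in> sets borel" by measurable
    ultimately show ?thesis by simp
  qed
  have G1: "G t \<le> 1" for t
  proof -
    have "G t \<le> (\<integral>\<^sup>+ e. w e * indicator Z e \<partial>lborel)"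
      unfolding G_def by (intro nn_integral_mono) (auto simp: indicator_def)
    also have "\<dots> = 1" using assms(7) by (simp add: Z_def M_def)
    finally show ?thesis .
  qed
  have W01: "0 \<le> W t \<and> W t \<le> 1" for t
    using G1[of t] by (auto simp: W_def enn2real_leI)
  have GW: "G t = ennreal (W t)" for t
    using G1[of t] by (auto simp: W_def ennreal_enn2real_if top_unique)
  have Wmono: "mono W"
  proof (rule monoI)
    fix s t :: real assume "s \<le> t"
    then have "G s \<le> G t"
      unfolding G_def by (intro nn_integral_mono) (auto simp: indicator_def)
    then show "W s \<le> W t" using W01[of t] by (simp add: GW)
  qed
  have WDm[measurable]: "(\<lambda>p. W (D p)) \<in> borel_measurable Q"
    using measurable_compose[OF Dm borel_measurable_mono[OF Wmono]] by simp
  have int: "integrable Q (\<lambda>p. W (D p))"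
    by (rule P.integrable_const_bound[where B=1]) (use W01 in auto)
  define E where "E = (\<integral>p. W (D p) \<partial>Q)"
  have cdfW: "cdf_w w (sup_dist d) t = W t" for t
    by (simp add: cdf_w_def W_def G_def Z_def M_def)
  have r0: "post_risk Q c0 c1 d w 0 = c0 * E"
    unfolding post_risk_def loss_def E_def by (simp add: cdfW D_def)
  have r1: "post_risk Q c0 c1 d w 1 = c1 * (1 - E)"
  proof -
    have "post_risk Q c0 c1 d w 1 = (\<integral>p. c1 - c1 * W (D p) \<partial>Q)"
      unfolding post_risk_def loss_def by (simp add: cdfW D_def algebra_simps)
    also have "\<dots> = c1 - c1 * E"
      using int by (simp add: E_def P.prob_space)
    finally show ?thesis by (simp add: algebra_simps)
  qed
  have wiks: "WIKS Q d w = E"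
  proof -
    have Sm: "{p \<in> space Q. e < D p} \<in> sets Q" for e by measurable
    have "(\<integral>\<^sup>+ e. w e * indicator Z e * emeasure Q {p \<in> space Q. e < D p} \<partial>lborel)
        = (\<integral>\<^sup>+ e. (\<integral>\<^sup>+ p. w e * indicator Z e * indicator {p \<in> space Q. e < D p} p \<partial>Q) \<partial>lborel)"
      by (intro nn_integral_cong) (simp add: nn_integral_cmult_indicator[OF Sm])
    also have "\<dots> = (\<integral>\<^sup>+ p. (\<integral>\<^sup>+ e. w e * indicator Z e * indicator {p \<in> space Q. e < D p} p \<partial>lborel) \<partial>Q)"
    proof -
      interpret PS: pair_sigma_finite Q lborel
        by (simp add: pair_sigma_finite_def P.sigma_finite_measure_axioms lborel.sigma_finite_measure_axioms)
      have "(\<lambda>(p, e). w e * indicator Z e * indicator {p \<in> space Q. e < D p} p) \<in> borel_measurable (Q \<Otimes>\<^sub>M lborel)"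
      proof (subst measurable_cong)
        fix x :: "(('m \<times> 'm) \<times> real)" assume "x \<in> space (Q \<Otimes>\<^sub>M lborel)"
        then show "(\<lambda>(p, e). w e * indicator Z e * indicator {p \<in> space Q. e < D p} p) x
          = w (snd x) * indicator Z (snd x) * indicator {x \<in> space (Q \<Otimes>\<^sub>M lborel). snd x < D (fst x)} x"
          by (cases x) (auto simp: space_pair_measure indicator_def)
      next
        show "(\<lambda>x. w (snd x) * indicator Z (snd x) * indicator {x \<in> space (Q \<Otimes>\<^sub>M lborel). snd x < D (fst x)} x)
          \<in> borel_measurable (Q \<Otimes>\<^sub>M lborel)" by measurable
      qed
      from PS.Fubini'[OF this] show ?thesis by simp
    qed
    also have "\<dots> = (\<integral>\<^sup>+ p. ennreal (W (D p)) \<partial>Q)"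
    proof (intro nn_integral_cong)
      fix p assume p: "p \<in> space Q"
      have "(\<integral>\<^sup>+ e. w e * indicator Z e * indicator {p \<in> space Q. e < D p} p \<partial>lborel)
          = (\<integral>\<^sup>+ e. w e * indicator (Z \<inter> {..D p}) e \<partial>lborel)"
        by (intro nn_integral_cong_AE, use AE_lborel_singleton[of "D p"] in eventually_elim)
           (use p in \<open>auto simp: indicator_def\<close>)
      then show "(\<integral>\<^sup>+ e. w e * indicator Z e * indicator {p \<in> space Q. e < D p} p \<partial>lborel) = ennreal (W (D p))"
        by (simp add: GW[symmetric] G_def)
    qed
    also have "\<dots> = ennreal E"
      unfolding E_def using W01 int by (intro nn_integral_eq_integral) auto
    finally show ?thesis
      using W01 by (simp add: WIKS_def Z_def M_def D_def E_def integral_nonneg_AE)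
  qed
  have "bayes_rejects Q c0 c1 d w \<longleftrightarrow> c1 < (c1 + c0) * E"
    unfolding bayes_rejects_def r0 r1 by (simp add: algebra_simps)
  also have "\<dots> \<longleftrightarrow> c1 / (c1 + c0) < E"
    using assms(8,9) by (simp add: pos_divide_less_eq mult.commute)
  finally show ?thesis by (simp add: wiks)
qed

end
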